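(* Consider the controlled mechanical system on $G$ $$\dot g=T_eR_g(\xi),\qquad \dot\xi+\sharp\big[\mathrm{ad}^*_\xi\flat(\xi)\big]=\sum_{a=1}^m u^af_a,$$ where $f_1,\dots,f_m\in\mathfrak{g}$ are linearly independent, $\mathfrak{f}=\mathrm{span}\{f_1,\dots,f_m\}$, $m<n=\dim\mathfrak{g}$. Let $\mathfrak{d}\subseteq\mathfrak{g}$ be a subspace with $\mathfrak{g}=\mathfrak{f}\oplus\mathfrak{d}$. For $\xi\in\mathfrak{g}$ write uniquely $\sharp[\mathrm{ad}^*_\xi\flat(\xi)]=\eta(\xi)+\sum_b\tau^b(\xi)f_b$ with $\eta(\xi)\in\mathfrak{d}$, and define the feedback $u^*(\xi)=(\tau^1(\xi),\dots,\tau^m(\xi))$. Then $u^*$ makes $\mathfrak{d}$ a virtual nonholonomic constraint: every solution of the closed-loop system with $u=u^*(\xi)$ and $\xi(0)\in\mathfrak{d}$ satisfies $\xi(t)\in\mathfrak{d}$ for all $t\ge0$. Moreover, this control law is unique: if $\xi(t)$ is a solution of the system for some control $u(t)$ with $\xi(t)\in\mathfrak{d}$ for all $t$, then $u(t)=u^*(\xi(t))$ for all $t$.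
   Context: $G$ is a Lie group of dimension $n$ with Lie algebra $\mathfrak{g}=T_eG$, $R_g(h)=hg$, and $\langle\cdot,\cdot\rangle$ is an inner product on $\mathfrak{g}$ (inducing a right-invariant metric on $G$). $\flat:\mathfrak{g}\to\mathfrak{g}^*$, $\flat(\xi)(\eta)=\langle\xi,\eta\rangle$, $\sharp=\flat^{-1}$; $\mathrm{ad}^*_\xi$ is the dual of $\mathrm{ad}_\xi=[\xi,\cdot]$. A virtual nonholonomic constraint for the system is a subspace $\mathfrak{d}\subseteq\mathfrak{g}$ that is controlled invariant: there is a control law such that solutions of the closed-loop system with $\xi(0)\in\mathfrak{d}$ satisfy $\xi(t)\in\mathfrak{d}$ for all $t\ge0$. *)

theory Defs
  imports "HOL-Analysis.Analysis"
begin

text \<open>A Lie bracket on the finite-dimensional inner product space 'a (playing the role of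
the Lie algebra g, with the type's inner product being the given inner product).\<close>
definition lie_bracket :: "('a::real_vector \<Rightarrow> 'a \<Rightarrow> 'a) \<Rightarrow> bool" where
  "lie_bracket br \<longleftrightarrow> bilinear br \<and> (\<forall>x y. br x y = - br y x)
     \<and> (\<forall>x y z. br x (br y z) + br y (br z x) + br z (br x y) = 0)"

text \<open>sharp[ad^*_xi flat(xi)]: the unique vector w with <w, eta> = <xi, [xi, eta]> for all eta.\<close>
definition ep_term :: "('a::real_inner \<Rightarrow> 'a \<Rightarrow> 'a) \<Rightarrow> 'a \<Rightarrow> 'a" where
  "ep_term br \<xi> = (THE w. \<forall>\<eta>. inner w \<eta> = inner \<xi> (br \<xi> \<eta>))"

text \<open>The feedback u^*(xi) = (tau^1(xi),...,tau^m(xi)), indexed by 0..<m (zero outside),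
where ep_term br xi = eta(xi) + sum_b tau^b(xi) f_b with eta(xi) in d.\<close>
definition ustar :: "('a::real_inner \<Rightarrow> 'a \<Rightarrow> 'a) \<Rightarrow> (nat \<Rightarrow> 'a) \<Rightarrow> nat \<Rightarrow> 'a set \<Rightarrow> 'a \<Rightarrow> nat \<Rightarrow> real" where
  "ustar br f m d \<xi> = (THE \<tau>. (\<forall>b\<ge>m. \<tau> b = 0) \<and>
      (\<exists>\<eta>\<in>d. ep_term br \<xi> = \<eta> + (\<Sum>b<m. \<tau> b *\<^sub>R f b)))"

end

theory Submission imports Defs begin

lemma indep_coeffs:
  fixes f :: "nat \<Rightarrow> 'a::euclidean_space"
  assumes "independent (f ` {..<m})" "inj_on f {..<m}"
    and "(\<Sum>b<m. c b *\<^sub>R f b) = 0" "a < m"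
  shows "c a = 0"
proof -
  let ?g = "\<lambda>v. c (inv_into {..<m} f v)"
  have "(\<Sum>v\<in>f ` {..<m}. ?g v *\<^sub>R v) = (\<Sum>b<m. ?g (f b) *\<^sub>R f b)"
    using assms(2) by (simp add: sum.reindex)
  also have "\<dots> = (\<Sum>b<m. c b *\<^sub>R f b)"
    using assms(2) by (intro sum.cong) auto
  finally have "(\<Sum>v\<in>f ` {..<m}. ?g v *\<^sub>R v) = 0" using assms(3) by simp
  with assms(1) have "\<forall>v\<in>f ` {..<m}. ?g v = 0"
    unfolding independent_explicit by (elim conjE allE[where x="?g"]) blast
  then have "?g (f a) = 0" using assms(4) by blast
  then show ?thesis using assms(2,4) by simp
qed

lemma ustar_char:
  fixes f :: "nat \<Rightarrow> 'a::euclidean_space"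
  assumes "independent (f ` {..<m})" "inj_on f {..<m}" "subspace d"
    and "span (f ` {..<m}) \<inter> d = {0}"
    and "\<forall>b\<ge>m. \<tau> b = 0" "\<eta> \<in> d" "ep_term br \<xi> = \<eta> + (\<Sum>b<m. \<tau> b *\<^sub>R f b)"
  shows "ustar br f m d \<xi> = \<tau>"
  unfolding ustar_def
proof (rule the_equality)
  show "(\<forall>b\<ge>m. \<tau> b = 0) \<and> (\<exists>\<eta>\<in>d. ep_term br \<xi> = \<eta> + (\<Sum>b<m. \<tau> b *\<^sub>R f b))"
    using assms by blast
next
  fix \<tau>' assume h: "(\<forall>b\<ge>m. \<tau>' b = 0) \<and> (\<exists>\<eta>\<in>d. ep_term br \<xi> = \<eta> + (\<Sum>b<m. \<tau>' b *\<^sub>R f b))"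
  then obtain \<eta>' where e': "\<eta>' \<in> d" "ep_term br \<xi> = \<eta>' + (\<Sum>b<m. \<tau>' b *\<^sub>R f b)" by blast
  have eq: "\<eta> - \<eta>' = (\<Sum>b<m. (\<tau>' b - \<tau> b) *\<^sub>R f b)"
    using e'(2) assms(7) by (simp add: scaleR_diff_left sum_subtractf algebra_simps)
  have "\<eta> - \<eta>' \<in> d" using assms(3,6) e'(1) by (simp add: subspace_diff)
  moreover have "\<eta> - \<eta>' \<in> span (f ` {..<m})"
    unfolding eq by (intro span_sum span_mul span_base) auto
  ultimately have "\<eta> - \<eta>' = 0" using assms(4) by blast
  then have z: "(\<Sum>b<m. (\<tau>' b - \<tau> b) *\<^sub>R f b) = 0" using eq by simp
  show "\<tau>' = \<tau>"
  proof
    fix b show "\<tau>' b = \<tau> b"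
    proof (cases "b < m")
      case True
      from indep_coeffs[OF assms(1,2) z True] show ?thesis by simp
    next
      case False thus ?thesis using h assms(5) by simp
    qed
  qed
qed

lemma ustar_exists:
  fixes f :: "nat \<Rightarrow> 'a::euclidean_space"
  assumes "independent (f ` {..<m})" "inj_on f {..<m}" "subspace d"
    and "span (f ` {..<m}) \<inter> d = {0}"
    and "\<forall>x. \<exists>y z. y \<in> span (f ` {..<m}) \<and> z \<in> d \<and> x = y + z"
  shows "ep_term br \<xi> - (\<Sum>b<m. ustar br f m d \<xi> b *\<^sub>R f b) \<in> d"
proof -
  obtain y z where yz: "y \<in> span (f ` {..<m})" "z \<in> d" "ep_term br \<xi> = y + z"
    using assms(5) by blast
  have "y \<in> span (f ` {..<m})" by fact
  then obtain c where c: "y = (\<Sum>b<m. c b *\<^sub>R f b)"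
    by (auto simp: span_finite sum.reindex[OF assms(2)])
  define \<tau> where "\<tau> = (\<lambda>b. if b < m then c b else 0)"
  have "(\<Sum>b<m. \<tau> b *\<^sub>R f b) = y" unfolding c \<tau>_def by (intro sum.cong) auto
  then have "ustar br f m d \<xi> = \<tau>"
    by (intro ustar_char[OF assms(1-4) _ yz(2)]) (auto simp: \<tau>_def yz(3))
  then show ?thesis using yz \<open>(\<Sum>b<m. \<tau> b *\<^sub>R f b) = y\<close> by simp
qed

lemma in_sub:
  fixes d :: "'a::euclidean_space set"
  assumes "subspace d" "\<And>v. (\<forall>x\<in>d. inner v x = 0) \<Longrightarrow> inner v y = 0"
  shows "y \<in> d"
proof -
  obtain p q where pq: "p \<in> span d" "\<And>w. w \<in> span d \<Longrightarrow> orthogonal q w" "y = p + q"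
    by (rule orthogonal_subspace_decomp_exists[of d y]) blast
  have "\<forall>x\<in>d. inner q x = 0" using pq(2) span_base by (auto simp: orthogonal_def)
  then have "inner q y = 0" by (rule assms(2))
  moreover have "inner q p = 0" using pq(1,2) by (simp add: orthogonal_def)
  ultimately have "inner q q = 0" using pq(3) by (simp add: inner_add_right)
  then have "q = 0" by simp
  then show ?thesis using pq assms(1) by (metis add.right_neutral span_eq_iff)
qed

lemma inner_deriv:
  assumes "(\<xi> has_vector_derivative x') (at t within I)"
  shows "((\<lambda>s. inner v (\<xi> s)) has_vector_derivative inner v x') (at t within I)"
  using bounded_linear.has_vector_derivative[OF bounded_linear_inner_right assms] .

lemma stay:
  fixes \<xi> :: "real \<Rightarrow> 'a::euclidean_space"
  assumes "is_interval I" "c \<in> I" "subspace d"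
    and "\<forall>t\<in>I. (\<xi> has_vector_derivative \<xi>' t) (at t within I)"
    and "\<forall>t\<in>I. \<xi>' t \<in> d" "\<xi> c \<in> d" "t \<in> I"
  shows "\<xi> t \<in> d"
proof (rule in_sub[OF assms(3)])
  fix v assume v: "\<forall>x\<in>d. inner v x = 0"
  have "convex I" using assms(1) by (simp add: is_interval_convex)
  moreover have "\<And>s. s \<in> I \<Longrightarrow> ((\<lambda>s. inner v (\<xi> s)) has_vector_derivative 0) (at s within I)"
  proof -
    fix s assume s: "s \<in> I"
    have "((\<lambda>s. inner v (\<xi> s)) has_vector_derivative inner v (\<xi>' s)) (at s within I)"
      using inner_deriv assms(4) s by blast
    moreover have "inner v (\<xi>' s) = 0" using v assms(5) s by blast
    ultimately show "((\<lambda>s. inner v (\<xi> s)) has_vector_derivative 0) (at s within I)" by simp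
  qed
  ultimately obtain k where "\<And>s. s \<in> I \<Longrightarrow> inner v (\<xi> s) = k"
    using has_vector_derivative_zero_constant by metis
  then show "inner v (\<xi> t) = 0" using assms(2,6,7) v by metis
qed

lemma deriv_in:
  fixes \<xi> :: "real \<Rightarrow> 'a::euclidean_space"
  assumes "is_interval I" "s \<in> I" "t \<in> I" "s \<noteq> t" "subspace d"
    and "(\<xi> has_vector_derivative x') (at t within I)"
    and "\<forall>t\<in>I. \<xi> t \<in> d"
  shows "x' \<in> d"
proof (rule in_sub[OF assms(5)])
  fix v assume v: "\<forall>x\<in>d. inner v x = 0"
  have "t islimpt I"
  proof (rule connected_imp_perfect)
    show "connected I" using assms(1) by (simp add: is_interval_connected)
    show "t \<in> I" by fact
    fix x show "I \<noteq> {x}" using assms(2-4) by blast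
  qed
  then have nb: "at t within I \<noteq> bot" by (simp add: trivial_limit_within)
  have "((\<lambda>s. inner v (\<xi> s)) has_vector_derivative 0) (at t within I)"
    by (rule has_vector_derivative_transform[OF assms(3), where f="\<lambda>_. 0"])
       (use v assms(7) in auto)
  moreover have "((\<lambda>s. inner v (\<xi> s)) has_vector_derivative inner v x') (at t within I)"
    using inner_deriv[OF assms(6)] .
  ultimately show "inner v x' = 0" using vector_derivative_unique_within[OF nb] by metis
qed

theorem theorem5:
  fixes br :: "'a::euclidean_space \<Rightarrow> 'a \<Rightarrow> 'a"
    and f :: "nat \<Rightarrow> 'a" and m :: nat and d :: "'a set"
  assumes lie: "lie_bracket br"
    and f_indep: "independent (f ` {..<m})" and f_inj: "inj_on f {..<m}"
    and m_lt: "m < DIM('a)"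
    and d_sub: "subspace d"
    and direct1: "span (f ` {..<m}) \<inter> d = {0}"
    and direct2: "\<forall>x. \<exists>y z. y \<in> span (f ` {..<m}) \<and> z \<in> d \<and> x = y + z"
  shows
    "(\<forall>(I::real set) \<xi> \<xi>'. is_interval I \<and> 0 \<in> I \<and>
        (\<forall>t\<in>I. (\<xi> has_vector_derivative \<xi>' t) (at t within I) \<and>
                 \<xi>' t + ep_term br (\<xi> t) = (\<Sum>a<m. ustar br f m d (\<xi> t) a *\<^sub>R f a)) \<and>
        \<xi> 0 \<in> d
        \<longrightarrow> (\<forall>t\<in>I. t \<ge> 0 \<longrightarrow> \<xi> t \<in> d))
   \<and> (\<forall>(I::real set) \<xi> \<xi>' (u :: real \<Rightarrow> nat \<Rightarrow> real). is_interval I \<and> (\<exists>s\<in>I. \<exists>t\<in>I. s \<noteq> t) \<and>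
        (\<forall>t\<in>I. (\<xi> has_vector_derivative \<xi>' t) (at t within I) \<and>
                 \<xi>' t + ep_term br (\<xi> t) = (\<Sum>a<m. u t a *\<^sub>R f a)) \<and>
        (\<forall>t\<in>I. \<xi> t \<in> d)
        \<longrightarrow> (\<forall>t\<in>I. \<forall>a<m. u t a = ustar br f m d (\<xi> t) a))"
  proof (intro conjI allI impI)
  fix I :: "real set" and \<xi> \<xi>'
  assume H: "is_interval I \<and> 0 \<in> I \<and>
        (\<forall>t\<in>I. (\<xi> has_vector_derivative \<xi>' t) (at t within I) \<and>
                 \<xi>' t + ep_term br (\<xi> t) = (\<Sum>a<m. ustar br f m d (\<xi> t) a *\<^sub>R f a)) \<and>
        \<xi> 0 \<in> d"
  have "\<forall>t\<in>I. \<xi>' t \<in> d"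
  proof
    fix t assume t: "t \<in> I"
    have "ep_term br (\<xi> t) - (\<Sum>b<m. ustar br f m d (\<xi> t) b *\<^sub>R f b) \<in> d"
      by (rule ustar_exists[OF f_indep f_inj d_sub direct1 direct2])
    then have "- (ep_term br (\<xi> t) - (\<Sum>b<m. ustar br f m d (\<xi> t) b *\<^sub>R f b)) \<in> d"
      by (rule subspace_neg[OF d_sub])
    moreover have "\<xi>' t = - (ep_term br (\<xi> t) - (\<Sum>b<m. ustar br f m d (\<xi> t) b *\<^sub>R f b))"
    proof -
      have "\<xi>' t + ep_term br (\<xi> t) = (\<Sum>a<m. ustar br f m d (\<xi> t) a *\<^sub>R f a)"
        using H t by blast
      then show ?thesis by (simp add: algebra_simps eq_diff_eq)
    qed
    ultimately show "\<xi>' t \<in> d" by simp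
  qed
  then show "\<forall>t\<in>I. t \<ge> 0 \<longrightarrow> \<xi> t \<in> d"
  proof (intro ballI impI)
    fix t assume "t \<in> I"
    from H have "is_interval I" "0 \<in> I" "\<forall>t\<in>I. (\<xi> has_vector_derivative \<xi>' t) (at t within I)" "\<xi> 0 \<in> d"
      by auto
    from stay[OF this(1,2) d_sub this(3) \<open>\<forall>t\<in>I. \<xi>' t \<in> d\<close> this(4) \<open>t \<in> I\<close>]
    show "\<xi> t \<in> d" .
  qed
next
  fix I :: "real set" and \<xi> \<xi>' and u :: "real \<Rightarrow> nat \<Rightarrow> real"
  assume H: "is_interval I \<and> (\<exists>s\<in>I. \<exists>t\<in>I. s \<noteq> t) \<and>
        (\<forall>t\<in>I. (\<xi> has_vector_derivative \<xi>' t) (at t within I) \<and>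
                 \<xi>' t + ep_term br (\<xi> t) = (\<Sum>a<m. u t a *\<^sub>R f a)) \<and>
        (\<forall>t\<in>I. \<xi> t \<in> d)"
  show "\<forall>t\<in>I. \<forall>a<m. u t a = ustar br f m d (\<xi> t) a"
  proof (intro ballI allI impI)
    fix t a assume t: "t \<in> I" and a: "a < m"
    from H obtain s1 s2 where s: "s1 \<in> I" "s2 \<in> I" "s1 \<noteq> s2" by blast
    obtain s where s': "s \<in> I" "s \<noteq> t" using s by metis
    have "\<xi>' t \<in> d"
    proof -
      from H have "is_interval I" "(\<xi> has_vector_derivative \<xi>' t) (at t within I)" "\<forall>t\<in>I. \<xi> t \<in> d"
        using t by auto
      from deriv_in[OF this(1) s'(1) t s'(2) d_sub this(2,3)] show ?thesis .
    qed
    then have m: "- \<xi>' t \<in> d" using d_sub by (simp add: subspace_neg)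
    define \<tau> where "\<tau> = (\<lambda>b. if b < m then u t b else 0)"
    have "(\<Sum>b<m. \<tau> b *\<^sub>R f b) = (\<Sum>b<m. u t b *\<^sub>R f b)"
      unfolding \<tau>_def by (intro sum.cong) auto
    then have "ep_term br (\<xi> t) = - \<xi>' t + (\<Sum>b<m. \<tau> b *\<^sub>R f b)"
    proof -
      have "\<xi>' t + ep_term br (\<xi> t) = (\<Sum>b<m. u t b *\<^sub>R f b)" using H t by blast
      then show ?thesis using \<open>(\<Sum>b<m. \<tau> b *\<^sub>R f b) = (\<Sum>b<m. u t b *\<^sub>R f b)\<close>
        by (simp add: algebra_simps eq_diff_eq)
    qed
    then have "ustar br f m d (\<xi> t) = \<tau>"
      by (intro ustar_char[OF f_indep f_inj d_sub direct1 _ m]) (auto simp: \<tau>_def)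
    then show "u t a = ustar br f m d (\<xi> t) a" using a by (simp add: \<tau>_def)
  qed
qed

end
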